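(* Let $\Phi\triangleright\Gamma\vdash^{(b,e,m,f)}t:\sigma$ be a tight derivation in system $\mathscr{E}$. Then there exist $u\in\mathcal{M}$ and a head-reduction sequence $\rho: t\to_h^{(b,e,m)}u$ (containing exactly $b$ steps of kind (b), $e$ steps of kind (e) and $m$ steps of kind (m)) such that $|u|=f$.
   Context: Pair pattern calculus: patterns $p,q ::= x\mid\langle p,q\rangle$ (linear); $\mathrm{var}(p)$ = variables of $p$; $p\# q$ means disjoint variables. Terms $t,u ::= x\mid\lambda p.t\mid\langle t,u\rangle\mid t\,u\mid t[p/u]$, $\mathrm{var}(p)$ bound in $t$ in $\lambda p.t$ and $t[p/u]$; $\mathrm{fv}$ as usual; terms modulo $\alpha$. List contexts $L::=\Box\mid L[p/u]$, $L\langle t\rangle$ plugging (possibly capturing), $\mathrm{bv}(L)$ variables bound by $L$; $t\{x/u\}$ capture-avoiding substitution; $\mathrm{abs}(t)$ iff $t=L\langle\lambda p.u\rangle$. Head reduction ($t\not\to_h$: no $u$ with $t\to_h u$): (b) $L\langle\lambda p.t\rangle u\to_h L\langle t[p/u]\rangle$ if $\mathrm{bv}(L)\cap\mathrm{fv}(u)=\emptyset$; (m) $t[\langle p_1,p_2\rangle/L\langle\langle u_1,u_2\rangle\rangle]\to_h L\langle t[p_1/u_1][p_2/u_2]\rangle$ if $t\not\to_h$ and $\mathrm{bv}(L)\cap\mathrm{fv}(t)=\emptyset$; (e) $t[x/u]\to_h t\{x/u\}$ if $t\not\to_h$; closure: $\lambda p.t\to_h\lambda p.t'$ if $t\to_h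 t'$; $tu\to_h t'u$ if $t\to_h t'$ and not $\mathrm{abs}(t)$; $t[p/u]\to_h t'[p/u]$ if $t\to_h t'$; $t[p/u]\to_h t[p/u']$ if $t\not\to_h$, $p$ not a variable, $u\to_h u'$. The kind of a step is the base rule (b), (e) or (m) it uses. Canonical forms $\mathcal{M} ::= \lambda p.\mathcal{M}\mid\langle t,t\rangle\mid\mathcal{M}[\langle p_1,p_2\rangle/\mathcal{N}]\mid\mathcal{N}$, $\mathcal{N} ::= x\mid\mathcal{N}\,t\mid\mathcal{N}[\langle p_1,p_2\rangle/\mathcal{N}]$, with size $|x|=0$, $|\langle t,u\rangle|=1$, $|\mathcal{N}t|=|\mathcal{N}|+1$, $|\lambda p.\mathcal{M}|=|\mathcal{M}|+1$, $|\mathcal{M}[\langle p_1,p_2\rangle/\mathcal{N}]|=|\mathcal{M}|+|\mathcal{N}|+1$. System $\mathscr{E}$. Types: tight types $\mathtt{t} ::= \bullet_{\mathcal{N}}\mid\bullet_{\mathcal{M}}$; types $\sigma ::= \mathtt{t}\mid \mathcal{A}_1\times\mathcal{A}_2\mid \mathcal{A}\to\sigma$; multi-types $\mathcal{A} ::= [\sigma_k]_{k\in K}$ (finite, possibly empty). Contexts map variables to multi-types, $\mathrm{dom}(\Gamma)$ = variables with non-empty multi-type; $\wedge$ pointwise multiset union; $\Gamma|_p$ restriction to $\mathrm{var}(p)$; $\Gamma\setminus\mathrm{var}(p)$ removal. $\mathrm{tight}(\sigma)$ iff $\sigma\in\{\bullet_{\mathcal{N}},\bullet_{\mathcal{M}}\}$,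 extended elementwise. Rules: (pat_v) $x:\mathcal{A}\Vdash^{(1,0,0)} x:\mathcal{A}$. (pat_×) from $\Gamma\Vdash^{(e_p,m_p,f_p)}p:\mathcal{A}$, $\Delta\Vdash^{(e_q,m_q,f_q)}q:\mathcal{B}$, $p\#q$ infer $\Gamma\wedge\Delta\Vdash^{(e_p+e_q,1+m_p+m_q,f_p+f_q)}\langle p,q\rangle:[\mathcal{A}\times\mathcal{B}]$. (pat_p) if $\mathrm{dom}(\Gamma)\subseteq\mathrm{var}(\langle p,q\rangle)$ and $\mathrm{tight}(\Gamma)$ then $\Gamma\Vdash^{(0,0,1)}\langle p,q\rangle:[\bullet_{\mathcal{N}}]$. (ax) $x:[\sigma]\vdash^{(0,0,0,0)}x:\sigma$. (abs) from $\Gamma\vdash^{(b,e,m,f)}t:\sigma$ and $\Gamma|_p\Vdash^{(e_p,m_p,f_p)}p:\mathcal{A}$ infer $\Gamma\setminus\mathrm{var}(p)\vdash^{(b+1,e+e_p,m+m_p,f+f_p)}\lambda p.t:\mathcal{A}\to\sigma$. (abs_p) from $\Gamma\vdash^{(b,e,m,f)}t:\mathtt{t}$ ($\mathtt{t}$ tight) and $\mathrm{tight}(\Gamma|_p)$ infer $\Gamma\setminus\mathrm{var}(p)\vdash^{(b,e,m,f+1)}\lambda p.t:\bullet_{\mathcal{M}}$. (many) from $(\Gamma_k\vdash^{(b_k,e_k,m_k,f_k)}t:\sigma_k)_{k\in K}$ infer $\wedge_k\Gamma_k\vdash^{(\sum b_k,\sum e_k,\sum m_k,\sum f_k)}t:[\sigma_k]_{k\in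 K}$. (app) from $\Gamma\vdash^{(b_t,e_t,m_t,f_t)}t:\mathcal{A}\to\sigma$, $\Delta\vdash^{(b_u,e_u,m_u,f_u)}u:\mathcal{A}$ infer $\Gamma\wedge\Delta\vdash^{(b_t+b_u,e_t+e_u,m_t+m_u,f_t+f_u)}t\,u:\sigma$. (app_p) from $\Gamma\vdash^{(b,e,m,f)}t:\bullet_{\mathcal{N}}$ infer $\Gamma\vdash^{(b,e,m,f+1)}t\,u:\bullet_{\mathcal{N}}$. (pair) from $\Gamma\vdash^{(b_t,e_t,m_t,f_t)}t:\mathcal{A}$, $\Delta\vdash^{(b_u,e_u,m_u,f_u)}u:\mathcal{B}$ infer $\Gamma\wedge\Delta\vdash^{(b_t+b_u,e_t+e_u,m_t+m_u,f_t+f_u)}\langle t,u\rangle:\mathcal{A}\times\mathcal{B}$. (pair_p) $\vdash^{(0,0,0,1)}\langle t,u\rangle:\bullet_{\mathcal{M}}$. (match) from $\Gamma\vdash^{(b_t,e_t,m_t,f_t)}t:\sigma$, $\Gamma|_p\Vdash^{(e_p,m_p,f_p)}p:\mathcal{A}$, $\Delta\vdash^{(b_u,e_u,m_u,f_u)}u:\mathcal{A}$ infer $(\Gamma\setminus\mathrm{var}(p))\wedge\Delta\vdash^{(b_t+b_u,e_t+e_u+e_p,m_t+m_u+m_p,f_t+f_u+f_p)}t[p/u]:\sigma$. A derivation is tight if its context and its type are tight. *)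

theory Defs
  imports "HOL-Library.Multiset"
begin

section \<open>Syntax (locally nameless / de Bruijn presentation of terms modulo alpha)\<close>

text \<open>Patterns are linear, so a pattern is determined (up to alpha) by its shape.
  A pattern with n leaves binds n consecutive de Bruijn indices; for a pair pattern
  (PP p1 p2) the leaves of p1 get the innermost indices 0..nv p1 - 1 and the leaves
  of p2 the next ones.\<close>

datatype pat = PV | PP pat pat

primrec nv :: "pat \<Rightarrow> nat" where
  "nv PV = 1"
| "nv (PP p q) = nv p + nv q"

datatype trm = Var nat | Lam pat trm | Pair trm trm | App trm trm | Sub trm pat trm

text \<open>Sub t p u is the explicit matching t[p/u]; var(p) is bound in t only.\<close>

primrec lift :: "nat \<Rightarrow> nat \<Rightarrow> trm \<Rightarrow> trm" where
  "lift k c (Var i) = (if i < c then Var i else Var (i + k))"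
| "lift k c (Lam p t) = Lam p (lift k (c + nv p) t)"
| "lift k c (Pair t u) = Pair (lift k c t) (lift k c u)"
| "lift k c (App t u) = App (lift k c t) (lift k c u)"
| "lift k c (Sub t p u) = Sub (lift k (c + nv p) t) p (lift k c u)"

primrec subst :: "trm \<Rightarrow> nat \<Rightarrow> trm \<Rightarrow> trm" where
  "subst (Var i) j u = (if i < j then Var i else if i = j then lift j 0 u else Var (i - 1))"
| "subst (Lam p t) j u = Lam p (subst t (j + nv p) u)"
| "subst (Pair t s) j u = Pair (subst t j u) (subst s j u)"
| "subst (App t s) j u = App (subst t j u) (subst s j u)"
| "subst (Sub t p s) j u = Sub (subst t (j + nv p) u) p (subst s j u)"

text \<open>List contexts L ::= Box | L[p/u], as the list of its explicit matchings from
  innermost to outermost; plugging may capture.\<close>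
type_synonym lctx = "(pat \<times> trm) list"

definition plug :: "lctx \<Rightarrow> trm \<Rightarrow> trm" where
  "plug L t = foldl (\<lambda>s (p, u). Sub s p u) t L"

definition bvn :: "lctx \<Rightarrow> nat" where
  "bvn L = sum_list (map (nv \<circ> fst) L)"

definition is_abs :: "trm \<Rightarrow> bool" where
  "is_abs t \<longleftrightarrow> (\<exists>L p s. t = plug L (Lam p s))"

datatype kind = KB | KE | KM

text \<open>It is defined by
  structural recursion, which stratifies the negative premises (t not reducible).
  The side conditions bv(L) \<inter> fv(..) = {} of the named presentation correspond
  to the index shifts below.\<close>
primrec hsteps :: "trm \<Rightarrow> (kind \<times> trm) set" where
  "hsteps (Var x) = {}"
| "hsteps (Pair t u) = {}"
| "hsteps (Lam p t) = (\<lambda>(k, t'). (k, Lam p t')) ` hsteps t"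
| "hsteps (App t u) =
     {(KB, plug L (Sub s p (lift (bvn L) 0 u))) | L p s. t = plug L (Lam p s)}
     \<union> (if is_abs t then {} else (\<lambda>(k, t'). (k, App t' u)) ` hsteps t)"
| "hsteps (Sub t p u) =
     (\<lambda>(k, t'). (k, Sub t' p u)) ` hsteps t
     \<union> (if hsteps t = {} then
          (case p of
             PV \<Rightarrow> {(KE, subst t 0 u)}
           | PP p1 p2 \<Rightarrow>
               {(KM, plug L (Sub (Sub (lift (bvn L) (nv p1 + nv p2) t) p1 (lift (nv p2) 0 u1)) p2 u2))
                 | L u1 u2. u = plug L (Pair u1 u2)}
               \<union> (\<lambda>(k, u'). (k, Sub t p u')) ` hsteps u)
        else {})"

definition hred :: "trm \<Rightarrow> kind \<Rightarrow> trm \<Rightarrow> bool" where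
  "hred t k t' \<longleftrightarrow> (k, t') \<in> hsteps t"

inductive hreds :: "trm \<Rightarrow> nat \<Rightarrow> nat \<Rightarrow> nat \<Rightarrow> trm \<Rightarrow> bool" where
  hr_refl: "hreds t 0 0 0 t"
| hr_b: "hred t KB t' \<Longrightarrow> hreds t' b e m u \<Longrightarrow> hreds t (Suc b) e m u"
| hr_e: "hred t KE t' \<Longrightarrow> hreds t' b e m u \<Longrightarrow> hreds t b (Suc e) m u"
| hr_m: "hred t KM t' \<Longrightarrow> hreds t' b e m u \<Longrightarrow> hreds t b e (Suc m) u"

inductive canM :: "trm \<Rightarrow> bool" and canN :: "trm \<Rightarrow> bool" where
  cM_lam: "canM t \<Longrightarrow> canM (Lam p t)"
| cM_pair: "canM (Pair t u)"
| cM_sub: "canM t \<Longrightarrow> canN u \<Longrightarrow> canM (Sub t (PP p1 p2) u)"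
| cM_N: "canN t \<Longrightarrow> canM t"
| cN_var: "canN (Var x)"
| cN_app: "canN t \<Longrightarrow> canN (App t u)"
| cN_sub: "canN t \<Longrightarrow> canN u \<Longrightarrow> canN (Sub t (PP p1 p2) u)"

primrec csize :: "trm \<Rightarrow> nat" where
  "csize (Var x) = 0"
| "csize (Pair t u) = 1"
| "csize (App t u) = csize t + 1"
| "csize (Lam p t) = csize t + 1"
| "csize (Sub t p u) = csize t + csize u + 1"

datatype ty = TN | TM | Prod "ty multiset" "ty multiset" | Arr "ty multiset" ty

text \<open>TN = bullet_N, TM = bullet_M.\<close>

definition tight :: "ty \<Rightarrow> bool" where
  "tight s \<longleftrightarrow> s = TN \<or> s = TM"

definition tight_m :: "ty multiset \<Rightarrow> bool" where
  "tight_m A \<longleftrightarrow> (\<forall>s\<in>#A. tight s)"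

type_synonym ctx = "nat \<Rightarrow> ty multiset"

definition tight_ctx :: "ctx \<Rightarrow> bool" where
  "tight_ctx G \<longleftrightarrow> (\<forall>x. tight_m (G x))"

definition cempty :: ctx where "cempty = (\<lambda>_. {#})"

definition cplus :: "ctx \<Rightarrow> ctx \<Rightarrow> ctx" where
  "cplus G D = (\<lambda>x. G x + D x)"

definition csing :: "nat \<Rightarrow> ty multiset \<Rightarrow> ctx" where
  "csing x A = (\<lambda>y. if y = x then A else {#})"

text \<open>Gamma restricted to var(p), for a pattern binding the indices 0..k-1.\<close>
definition crestr :: "ctx \<Rightarrow> nat \<Rightarrow> ty multiset list" where
  "crestr G k = map G [0..<k]"

text \<open>Gamma minus var(p): the remaining indices, shifted down.\<close>
definition cdrop :: "ctx \<Rightarrow> nat \<Rightarrow> ctx" where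
  "cdrop G k = (\<lambda>x. G (x + k))"

text \<open>Pattern typing: the context is the list of multi-types of the pattern's
  variables (in index order), so union of the disjoint contexts is concatenation.\<close>
inductive ptyp :: "ty multiset list \<Rightarrow> pat \<Rightarrow> ty multiset \<Rightarrow> nat \<Rightarrow> nat \<Rightarrow> nat \<Rightarrow> bool" where
  pat_v: "ptyp [A] PV A 1 0 0"
| pat_x: "ptyp G p A ep mp fp \<Longrightarrow> ptyp D q B eq mq fq \<Longrightarrow>
          ptyp (G @ D) (PP p q) {#Prod A B#} (ep + eq) (1 + mp + mq) (fp + fq)"
| pat_p: "length G = nv (PP p q) \<Longrightarrow> (\<forall>A\<in>set G. tight_m A) \<Longrightarrow>
          ptyp G (PP p q) {#TN#} 0 0 1"

inductive ety :: "ctx \<Rightarrow> trm \<Rightarrow> ty \<Rightarrow> nat \<Rightarrow> nat \<Rightarrow> nat \<Rightarrow> nat \<Rightarrow> bool"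
  and emty :: "ctx \<Rightarrow> trm \<Rightarrow> ty multiset \<Rightarrow> nat \<Rightarrow> nat \<Rightarrow> nat \<Rightarrow> nat \<Rightarrow> bool" where
  ax: "ety (csing x {#s#}) (Var x) s 0 0 0 0"
| abs: "ety G t s b e m f \<Longrightarrow> ptyp (crestr G (nv p)) p A ep mp fp \<Longrightarrow>
        ety (cdrop G (nv p)) (Lam p t) (Arr A s) (b + 1) (e + ep) (m + mp) (f + fp)"
| abs_p: "ety G t s b e m f \<Longrightarrow> tight s \<Longrightarrow> (\<forall>A\<in>set (crestr G (nv p)). tight_m A) \<Longrightarrow>
        ety (cdrop G (nv p)) (Lam p t) TM b e m (f + 1)"
| many_nil: "emty cempty t {#} 0 0 0 0"
| many_cons: "emty G t A b e m f \<Longrightarrow> ety D t s b' e' m' f' \<Longrightarrow>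
        emty (cplus G D) t (A + {#s#}) (b + b') (e + e') (m + m') (f + f')"
| app: "ety G t (Arr A s) bt et mt ft \<Longrightarrow> emty D u A bu eu mu fu \<Longrightarrow>
        ety (cplus G D) (App t u) s (bt + bu) (et + eu) (mt + mu) (ft + fu)"
| app_p: "ety G t TN b e m f \<Longrightarrow> ety G (App t u) TN b e m (f + 1)"
| pair: "emty G t A bt et mt ft \<Longrightarrow> emty D u B bu eu mu fu \<Longrightarrow>
        ety (cplus G D) (Pair t u) (Prod A B) (bt + bu) (et + eu) (mt + mu) (ft + fu)"
| pair_p: "ety cempty (Pair t u) TM 0 0 0 1"
| match: "ety G t s bt et mt ft \<Longrightarrow> ptyp (crestr G (nv p)) p A ep mp fp \<Longrightarrow>
        emty D u A bu eu mu fu \<Longrightarrow>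
        ety (cplus (cdrop G (nv p)) D) (Sub t p u) s (bt + bu) (et + eu + ep) (mt + mu + mp) (ft + fu + fp)"

end

theory Submission
  imports Defs
begin


lemma plug_Nil[simp]: "plug [] t = t" by (simp add: plug_def)
lemma plug_snoc[simp]: "plug (L @ [x]) t = Sub (plug L t) (fst x) (snd x)"
  by (simp add: plug_def split: prod.splits)
lemma bvn_Nil[simp]: "bvn [] = 0" by (simp add: bvn_def)
lemma bvn_snoc[simp]: "bvn (L @ [x]) = bvn L + nv (fst x)" by (simp add: bvn_def)

lemma plug_Var[simp]: "plug L t = Var x \<longleftrightarrow> L = [] \<and> t = Var x"
  by (induct L rule: rev_induct) auto
lemma plug_Lam[simp]: "plug L t = Lam p s \<longleftrightarrow> L = [] \<and> t = Lam p s"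
  by (induct L rule: rev_induct) auto
lemma plug_Pair[simp]: "plug L t = Pair a c \<longleftrightarrow> L = [] \<and> t = Pair a c"
  by (induct L rule: rev_induct) auto
lemma plug_App[simp]: "plug L t = App a c \<longleftrightarrow> L = [] \<and> t = App a c"
  by (induct L rule: rev_induct) auto
lemma plug_Sub: "plug L t = Sub a p c \<longleftrightarrow> (L = [] \<and> t = Sub a p c) \<or> (\<exists>L'. L = L' @ [(p,c)] \<and> a = plug L' t)"
proof (cases L rule: rev_exhaust)
  case Nil then show ?thesis by simp
next
  case (snoc L' x) then show ?thesis by (cases x) auto
qed

definition is_pair :: "trm \<Rightarrow> bool" where
  "is_pair t \<longleftrightarrow> (\<exists>L a c. t = plug L (Pair a c))"

lemma plug_sym_simps[simp]:
  "Var x = plug L t \<longleftrightarrow> L = [] \<and> t = Var x"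
  "Lam p s = plug L t \<longleftrightarrow> L = [] \<and> t = Lam p s"
  "Pair a c = plug L t \<longleftrightarrow> L = [] \<and> t = Pair a c"
  "App a c = plug L t \<longleftrightarrow> L = [] \<and> t = App a c"
  by (metis plug_Var, metis plug_Lam, metis plug_Pair, metis plug_App)

lemma is_abs_simps[simp]:
  "\<not> is_abs (Var x)" "is_abs (Lam p t)" "\<not> is_abs (Pair a c)" "\<not> is_abs (App a c)"
  unfolding is_abs_def by (auto intro: exI[of _ "[]"])

lemma is_abs_Sub[simp]: "is_abs (Sub t p u) \<longleftrightarrow> is_abs t"
proof
  assume "is_abs (Sub t p u)"
  then obtain L q s where "Sub t p u = plug L (Lam q s)" by (auto simp: is_abs_def)
  then have "plug L (Lam q s) = Sub t p u" by simp
  then show "is_abs t" unfolding plug_Sub is_abs_def by auto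
next
  assume "is_abs t"
  then obtain L q s where "t = plug L (Lam q s)" by (auto simp: is_abs_def)
  then show "is_abs (Sub t p u)" unfolding is_abs_def by (metis plug_snoc fst_conv snd_conv)
qed

lemma is_pair_simps[simp]:
  "\<not> is_pair (Var x)" "\<not> is_pair (Lam p t)" "is_pair (Pair a c)" "\<not> is_pair (App a c)"
  unfolding is_pair_def by (auto intro: exI[of _ "[]"])

lemma is_pair_Sub[simp]: "is_pair (Sub t p u) \<longleftrightarrow> is_pair t"
proof
  assume "is_pair (Sub t p u)"
  then obtain L a c where "Sub t p u = plug L (Pair a c)" by (auto simp: is_pair_def)
  then have "plug L (Pair a c) = Sub t p u" by simp
  then show "is_pair t" unfolding plug_Sub is_pair_def by auto
next
  assume "is_pair t"
  then obtain L a c where "t = plug L (Pair a c)" by (auto simp: is_pair_def)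
  then show "is_pair (Sub t p u)" unfolding is_pair_def by (metis plug_snoc fst_conv snd_conv)
qed

lemma hsteps_App_empty: "hsteps (App t u) = {} \<longleftrightarrow> \<not> is_abs t \<and> hsteps t = {}"
  by (auto simp: is_abs_def)

lemma hsteps_Sub_empty: "hsteps (Sub t p u) = {} \<longleftrightarrow> hsteps t = {} \<and>
   (\<exists>p1 p2. p = PP p1 p2 \<and> \<not> is_pair u \<and> hsteps u = {})"
  by (cases p) (auto simp: is_pair_def)

lemma hsteps_Lam_empty: "hsteps (Lam p t) = {} \<longleftrightarrow> hsteps t = {}"
  by auto

definition cins :: "nat \<Rightarrow> nat \<Rightarrow> ctx \<Rightarrow> ctx" where
  "cins k c G = (\<lambda>x. if x < c then G x else if x < c + k then {#} else G (x - k))"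

definition csub :: "nat \<Rightarrow> ctx \<Rightarrow> ctx \<Rightarrow> ctx" where
  "csub j G D = (\<lambda>x. if x < j then G x else G (Suc x) + D (x - j))"

lemma cplus_cempty[simp]: "cplus cempty D = D" "cplus D cempty = D"
  by (auto simp: cplus_def cempty_def)
lemma cplus_comm: "cplus G D = cplus D G" by (auto simp: cplus_def fun_eq_iff add.commute)
lemma cplus_assoc: "cplus (cplus G D) H = cplus G (cplus D H)" by (auto simp: cplus_def fun_eq_iff add.assoc)
lemma cplus_lcomm: "cplus G (cplus D H) = cplus D (cplus G H)" by (auto simp: cplus_def fun_eq_iff add_ac)

lemma tight_m_plus[simp]: "tight_m (A + B) \<longleftrightarrow> tight_m A \<and> tight_m B"
  by (auto simp: tight_m_def)
lemma tight_ctx_cplus[simp]: "tight_ctx (cplus G D) \<longleftrightarrow> tight_ctx G \<and> tight_ctx D"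
  by (auto simp: tight_ctx_def cplus_def)
lemma tight_ctx_cempty[simp]: "tight_ctx cempty" by (auto simp: tight_ctx_def cempty_def tight_m_def)

lemma tight_ctx_from_parts:
  assumes "tight_ctx (cdrop G n)" "\<forall>A\<in>set (crestr G n). tight_m A"
  shows "tight_ctx G"
  unfolding tight_ctx_def
proof
  fix x show "tight_m (G x)"
  proof (cases "x < n")
    case True then show ?thesis using assms(2) by (auto simp: crestr_def)
  next
    case False then have "G x = cdrop G n (x - n)" by (simp add: cdrop_def)
    then show ?thesis using assms(1) by (simp add: tight_ctx_def)
  qed
qed

lemma ptyp_length: "ptyp P p A e m f \<Longrightarrow> length P = nv p"
  by (induction rule: ptyp.induct) auto

inductive_cases VarE: "ety G (Var x) s b e m f"
inductive_cases LamE: "ety G (Lam p t) s b e m f"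
inductive_cases PairE: "ety G (Pair t u) s b e m f"
inductive_cases AppE: "ety G (App t u) s b e m f"
inductive_cases SubE: "ety G (Sub t p u) s b e m f"
inductive_cases emtyE: "emty G t A b e m f"
inductive_cases PVE: "ptyp P PV A e m f"
inductive_cases PPE: "ptyp P (PP p q) A e m f"

lemma abs': "ety G t s b e m f \<Longrightarrow> ptyp (crestr G (nv p)) p A ep mp fp \<Longrightarrow>
  G' = cdrop G (nv p) \<Longrightarrow> b' = b + 1 \<Longrightarrow> e' = e + ep \<Longrightarrow> m' = m + mp \<Longrightarrow> f' = f + fp \<Longrightarrow>
  s' = Arr A s \<Longrightarrow> ety G' (Lam p t) s' b' e' m' f'"
  using abs by blast
lemma abs_p': "ety G t s b e m f \<Longrightarrow> tight s \<Longrightarrow> (\<forall>A\<in>set (crestr G (nv p)). tight_m A) \<Longrightarrow>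
  G' = cdrop G (nv p) \<Longrightarrow> f' = f + 1 \<Longrightarrow> s' = TM \<Longrightarrow> ety G' (Lam p t) s' b e m f'"
  using abs_p by blast
lemma app': "ety G t (Arr A s) bt et mt ft \<Longrightarrow> emty D u A bu eu mu fu \<Longrightarrow> G' = cplus G D \<Longrightarrow>
  b' = bt + bu \<Longrightarrow> e' = et + eu \<Longrightarrow> m' = mt + mu \<Longrightarrow> f' = ft + fu \<Longrightarrow>
  ety G' (App t u) s b' e' m' f'"
  using app by blast
lemma app_p': "ety G t TN b e m f \<Longrightarrow> f' = f + 1 \<Longrightarrow> s' = TN \<Longrightarrow> ety G (App t u) s' b e m f'"
  using app_p by blast
lemma pair': "emty G t A bt et mt ft \<Longrightarrow> emty D u B bu eu mu fu \<Longrightarrow> G' = cplus G D \<Longrightarrow>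
  b' = bt + bu \<Longrightarrow> e' = et + eu \<Longrightarrow> m' = mt + mu \<Longrightarrow> f' = ft + fu \<Longrightarrow>
  ety G' (Pair t u) (Prod A B) b' e' m' f'"
  using pair by blast
lemma pair_p': "G = cempty \<Longrightarrow> ety G (Pair t u) TM 0 0 0 1"
  using pair_p by blast
lemma match': "ety G t s bt et mt ft \<Longrightarrow> ptyp (crestr G (nv p)) p A ep mp fp \<Longrightarrow>
  emty D u A bu eu mu fu \<Longrightarrow> G' = cplus (cdrop G (nv p)) D \<Longrightarrow>
  b' = bt + bu \<Longrightarrow> e' = et + eu + ep \<Longrightarrow> m' = mt + mu + mp \<Longrightarrow> f' = ft + fu + fp \<Longrightarrow>
  ety G' (Sub t p u) s b' e' m' f'"
  using match by blast
lemma many_cons': "emty G t A b e m f \<Longrightarrow> ety D t s b' e' m' f' \<Longrightarrow> G' = cplus G D \<Longrightarrow>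
  A' = A + {#s#} \<Longrightarrow> b'' = b + b' \<Longrightarrow> e'' = e + e' \<Longrightarrow> m'' = m + m' \<Longrightarrow> f'' = f + f' \<Longrightarrow>
  emty G' t A' b'' e'' m'' f''"
  using many_cons by blast
lemma many_nil': "G = cempty \<Longrightarrow> emty G t {#} 0 0 0 0"
  using many_nil by blast

lemma emty_empty: "emty G t {#} b e m f \<Longrightarrow> G = cempty \<and> b = 0 \<and> e = 0 \<and> m = 0 \<and> f = 0"
  by (erule emtyE) auto

lemma emty_pick:
  "emty G t A' b e m f \<Longrightarrow> A' = A + {#s#} \<Longrightarrow>
   \<exists>G1 D b1 e1 m1 f1 b2 e2 m2 f2. emty G1 t A b1 e1 m1 f1 \<and> ety D t s b2 e2 m2 f2 \<and>
     G = cplus G1 D \<and> b = b1 + b2 \<and> e = e1 + e2 \<and> m = m1 + m2 \<and> f = f1 + f2"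
proof (induction "size A'" arbitrary: G A' b e m f A rule: less_induct)
  case less
  from less.prems(1) show ?case
  proof (cases rule: emty.cases)
    case many_nil then show ?thesis using less.prems by simp
  next
    case (many_cons G0 A0 b0 e0 m0 f0 D0 s0 b1 e1 m1 f1)
    show ?thesis
    proof (cases "s0 = s")
      case True
      then have "A0 = A" using many_cons less.prems by simp
      then show ?thesis using many_cons True by blast
    next
      case False
      then have "s \<in># A0" using many_cons less.prems
        by (metis add_mset_add_single insert_noteq_member)
      then obtain A1 where A1: "A0 = A1 + {#s#}" by (metis insert_DiffM add_mset_add_single add.commute)
      have "size A0 < size A'" using many_cons by simp
      from less.hyps[OF this \<open>emty G0 t A0 b0 e0 m0 f0\<close> A1] obtain G1 D b1' e1' m1' f1' b2 e2 m2 f2 where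
        h: "emty G1 t A1 b1' e1' m1' f1'" "ety D t s b2 e2 m2 f2" "G0 = cplus G1 D"
        "b0 = b1' + b2" "e0 = e1' + e2" "m0 = m1' + m2" "f0 = f1' + f2" by blast
      have A: "A = A1 + {#s0#}" using many_cons less.prems A1
        by (metis add_mset_add_single add_mset_commute add_right_imp_eq union_commute)
      have "emty (cplus G1 D0) t A (b1' + b1) (e1' + e1) (m1' + m1) (f1' + f1)"
        using many_cons'[OF h(1) \<open>ety D0 t s0 b1 e1 m1 f1\<close>] A by simp
      moreover have "G = cplus (cplus G1 D0) D" using many_cons h by (simp add: cplus_assoc cplus_comm cplus_lcomm)
      ultimately show ?thesis using many_cons h by (intro exI conjI) (assumption | simp)+
    qed
  qed
qed

lemma emty_split:
  "emty G t (A1 + A2) b e m f \<Longrightarrow>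
   \<exists>G1 G2 b1 e1 m1 f1 b2 e2 m2 f2. emty G1 t A1 b1 e1 m1 f1 \<and> emty G2 t A2 b2 e2 m2 f2 \<and>
     G = cplus G1 G2 \<and> b = b1 + b2 \<and> e = e1 + e2 \<and> m = m1 + m2 \<and> f = f1 + f2"
proof (induction A2 arbitrary: G b e m f rule: multiset_induct)
  case empty
  then show ?case using many_nil by fastforce
next
  case (add x A2)
  from emty_pick[OF add.prems, of "A1 + A2" x] obtain G1 D b1 e1 m1 f1 b2 e2 m2 f2 where
    h: "emty G1 t (A1 + A2) b1 e1 m1 f1" "ety D t x b2 e2 m2 f2" "G = cplus G1 D"
    "b = b1 + b2" "e = e1 + e2" "m = m1 + m2" "f = f1 + f2" by auto
  from add.IH[OF h(1)] obtain H1 H2 c1 d1 n1 g1 c2 d2 n2 g2 where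
    i: "emty H1 t A1 c1 d1 n1 g1" "emty H2 t A2 c2 d2 n2 g2" "G1 = cplus H1 H2"
    "b1 = c1 + c2" "e1 = d1 + d2" "m1 = n1 + n2" "f1 = g1 + g2" by blast
  have "emty (cplus H2 D) t (add_mset x A2) (c2 + b2) (d2 + e2) (n2 + m2) (g2 + f2)"
    using many_cons'[OF i(2) h(2)] by simp
  then show ?case using h i by (intro exI conjI) (assumption | simp add: cplus_assoc)+
qed

lemma emty_single: "emty G t {#s#} b e m f \<Longrightarrow> ety G t s b e m f"
  using emty_pick[of G t "{#s#}" b e m f "{#}" s] emty_empty by fastforce

lemma single_emty: "ety G t s b e m f \<Longrightarrow> emty G t {#s#} b e m f"
  using many_cons'[OF many_nil] by fastforce

lemma plug_Lam_ty: "ety G (plug L (Lam p s)) \<tau> b e m f \<Longrightarrow> \<tau> \<noteq> TN \<and> (\<forall>A B. \<tau> \<noteq> Prod A B)"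
proof (induction L arbitrary: G \<tau> b e m f rule: rev_induct)
  case Nil then show ?case by (auto elim: LamE)
next
  case (snoc x L) from snoc.prems show ?case by simp (erule SubE, blast dest: snoc.IH)
qed

lemma plug_Pair_ty: "ety G (plug L (Pair a c)) \<tau> b e m f \<Longrightarrow> \<tau> \<noteq> TN \<and> (\<forall>A s. \<tau> \<noteq> Arr A s)"
proof (induction L arbitrary: G \<tau> b e m f rule: rev_induct)
  case Nil then show ?case by (auto elim: PairE)
next
  case (snoc x L) from snoc.prems show ?case by simp (erule SubE, blast dest: snoc.IH)
qed

lemma is_abs_ty: "is_abs t \<Longrightarrow> ety G t \<tau> b e m f \<Longrightarrow> \<tau> \<noteq> TN \<and> (\<forall>A B. \<tau> \<noteq> Prod A B)"
  unfolding is_abs_def using plug_Lam_ty by blast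
lemma is_pair_ty: "is_pair t \<Longrightarrow> ety G t \<tau> b e m f \<Longrightarrow> \<tau> \<noteq> TN \<and> (\<forall>A s. \<tau> \<noteq> Arr A s)"
  unfolding is_pair_def using plug_Pair_ty by blast


lemma crestr_cins: "n \<le> c \<Longrightarrow> crestr (cins k c G) n = crestr G n"
  by (auto simp: crestr_def cins_def)
lemma cdrop_cins: "cdrop (cins k (c + n) G) n = cins k c (cdrop G n)"
  by (auto simp: cdrop_def cins_def fun_eq_iff)
lemma cins_cplus: "cins k c (cplus G D) = cplus (cins k c G) (cins k c D)"
  by (auto simp: cplus_def cins_def fun_eq_iff)
lemma cins_cempty[simp]: "cins k c cempty = cempty"
  by (auto simp: cempty_def cins_def fun_eq_iff)
lemma cins_csing: "cins k c (csing x A) = csing (if x < c then x else x + k) A"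
  by (auto simp: csing_def cins_def fun_eq_iff)
lemma cins_0[simp]: "cins 0 c G = G"
  by (auto simp: cins_def fun_eq_iff)
lemma crestr_csub: "n \<le> j \<Longrightarrow> crestr (csub j G D) n = crestr G n"
  by (auto simp: crestr_def csub_def)
lemma cdrop_csub: "cdrop (csub (j + n) G D) n = csub j (cdrop G n) D"
  by (auto simp: cdrop_def csub_def fun_eq_iff)
lemma csub_cplus: "csub j (cplus G1 G2) (cplus D1 D2) = cplus (csub j G1 D1) (csub j G2 D2)"
  by (auto simp: csub_def cplus_def fun_eq_iff add_ac)
lemma csub_cempty[simp]: "csub j cempty cempty = cempty"
  by (auto simp: csub_def cempty_def fun_eq_iff)
lemma csub_csing_eq: "csub j (csing j A) D = cins j 0 D"
  by (auto simp: csub_def csing_def cins_def fun_eq_iff)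
lemma csub_csing_lt: "x < j \<Longrightarrow> csub j (csing x A) cempty = csing x A"
  by (auto simp: csub_def csing_def cempty_def fun_eq_iff)
lemma csub_csing_gt: "j < x \<Longrightarrow> csub j (csing x A) cempty = csing (x - 1) A"
  by (auto simp: csub_def csing_def cempty_def fun_eq_iff)

lemma ax': "G = csing x {#s#} \<Longrightarrow> ety G (Var x) s 0 0 0 0"
  using ax by blast

lemma pair_pS: "ety cempty (Pair t u) TM 0 0 0 (Suc 0)"
  using ety_emty.pair_p by simp

lemma lift_ty:
  shows "ety G t s b e m f \<Longrightarrow> ety (cins k c G) (lift k c t) s b e m f"
    and "emty G t A b e m f \<Longrightarrow> emty (cins k c G) (lift k c t) A b e m f"
proof (induction arbitrary: c and c rule: ety_emty.inducts)
  case (ax x s)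
  then show ?case by (auto intro!: ax' simp: cins_csing)
next
  case (abs G t s b e m f p A ep mp fp)
  have "ptyp (crestr (cins k (c + nv p) G) (nv p)) p A ep mp fp"
    using abs by (simp add: crestr_cins)
  from abs'[OF abs.IH[of "c + nv p"] this] show ?case by (simp add: cdrop_cins)
next
  case (abs_p G t s b e m f p)
  have "\<forall>A\<in>set (crestr (cins k (c + nv p) G) (nv p)). tight_m A"
    using abs_p by (simp add: crestr_cins)
  from abs_p'[OF abs_p.IH[of "c + nv p"] \<open>tight s\<close> this] show ?case by (simp add: cdrop_cins)
next
  case (many_nil t)
  then show ?case by (auto intro: many_nil')
next
  case (many_cons G t A b e m f D s b' e' m' f')
  show ?case by (rule many_cons'[OF many_cons.IH]) (simp_all add: cins_cplus)
next
  case (app G t A s bt et mt ft D u bu eu mu fu)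
  show ?case by (simp, rule app'[OF app.IH]) (simp_all add: cins_cplus)
next
  case (app_p G t b e m f u)
  show ?case by (simp, rule app_p'[OF app_p.IH]) simp_all
next
  case (pair G t A bt et mt ft D u B bu eu mu fu)
  show ?case by (simp, rule pair'[OF pair.IH]) (simp_all add: cins_cplus)
next
  case (pair_p t u)
  then show ?case by (simp add: pair_pS)
next
  case (match G t s bt et mt ft p A ep mp fp D u bu eu mu fu)
  have "ptyp (crestr (cins k (c + nv p) G) (nv p)) p A ep mp fp"
    using match by (simp add: crestr_cins)
  from match'[OF match.IH(1)[of "c + nv p"] this match.IH(2)[of c]] show ?case
    by (simp add: cdrop_cins cins_cplus)
qed

lemma lift_lift: "lift k c (lift k' c t) = lift (k + k') c t"
  by (induction t arbitrary: c) auto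

lemma lift_0[simp]: "lift 0 c t = t"
  by (induction t arbitrary: c) auto

lemma subst_ty:
  shows "ety G t s b e m f \<Longrightarrow> emty D u (G j) bu eu mu fu \<Longrightarrow>
           ety (csub j G D) (subst t j u) s (b+bu) (e+eu) (m+mu) (f+fu)"
    and "emty G t B b e m f \<Longrightarrow> emty D u (G j) bu eu mu fu \<Longrightarrow>
           emty (csub j G D) (subst t j u) B (b+bu) (e+eu) (m+mu) (f+fu)"
proof (induction arbitrary: j D bu eu mu fu and j D bu eu mu fu rule: ety_emty.inducts)
  case (ax x s)
  consider "x = j" | "x < j" | "j < x" by linarith
  then show ?case
  proof cases
    case 1
    then have "ety D u s bu eu mu fu" using ax by (auto simp: csing_def intro: emty_single)
    from lift_ty(1)[OF this, of j 0] show ?thesis using 1 by (simp add: csub_csing_eq)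
  next
    case 2
    then have "D = cempty \<and> bu = 0 \<and> eu = 0 \<and> mu = 0 \<and> fu = 0"
      using ax by (auto simp: csing_def dest: emty_empty)
    then show ?thesis using 2 by (auto intro!: ax' simp: csub_csing_lt)
  next
    case 3
    then have "D = cempty \<and> bu = 0 \<and> eu = 0 \<and> mu = 0 \<and> fu = 0"
      using ax by (auto simp: csing_def dest: emty_empty)
    then show ?thesis using 3 by (auto intro!: ax' simp: csub_csing_gt)
  qed
next
  case (abs G t s b e m f p A ep mp fp)
  have "emty D u (G (j + nv p)) bu eu mu fu" using abs.prems by (simp add: cdrop_def)
  from abs.IH[OF this] have "ety (csub (j + nv p) G D) (subst t (j + nv p) u) s (b + bu) (e + eu) (m + mu) (f + fu)" .
  moreover have "ptyp (crestr (csub (j + nv p) G D) (nv p)) p A ep mp fp"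
    using abs by (simp add: crestr_csub)
  ultimately show ?case by (auto intro!: abs' simp: cdrop_csub)
next
  case (abs_p G t s b e m f p)
  have "emty D u (G (j + nv p)) bu eu mu fu" using abs_p.prems by (simp add: cdrop_def)
  from abs_p.IH[OF this] have "ety (csub (j + nv p) G D) (subst t (j + nv p) u) s (b + bu) (e + eu) (m + mu) (f + fu)" .
  moreover have "\<forall>A\<in>set (crestr (csub (j + nv p) G D) (nv p)). tight_m A"
    using abs_p by (simp add: crestr_csub)
  ultimately show ?case using \<open>tight s\<close> by (auto intro!: abs_p' simp: cdrop_csub)
next
  case (many_nil t)
  then have "D = cempty \<and> bu = 0 \<and> eu = 0 \<and> mu = 0 \<and> fu = 0"
    by (auto simp: cempty_def dest: emty_empty)
  then show ?case by (auto intro: many_nil')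
next
  case (many_cons G t A b e m f D' s b' e' m' f')
  have "emty D u (G j + D' j) bu eu mu fu" using many_cons.prems by (simp add: cplus_def cdrop_def)
  from emty_split[OF this] obtain D1 D2 b1 e1 m1 f1 b2 e2 m2 f2 where
    h: "emty D1 u (G j) b1 e1 m1 f1" "emty D2 u (D' j) b2 e2 m2 f2" "D = cplus D1 D2"
    "bu = b1 + b2" "eu = e1 + e2" "mu = m1 + m2" "fu = f1 + f2"
    by blast
  show ?case by (rule many_cons'[OF many_cons.IH(1)[OF h(1)] many_cons.IH(2)[OF h(2)]])
     (simp_all add: h csub_cplus)
next
  case (app G t A s bt et mt ft D' u' bu' eu' mu' fu')
  have "emty D u (G j + D' j) bu eu mu fu" using app.prems by (simp add: cplus_def cdrop_def)
  from emty_split[OF this] obtain D1 D2 b1 e1 m1 f1 b2 e2 m2 f2 where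
    h: "emty D1 u (G j) b1 e1 m1 f1" "emty D2 u (D' j) b2 e2 m2 f2" "D = cplus D1 D2"
    "bu = b1 + b2" "eu = e1 + e2" "mu = m1 + m2" "fu = f1 + f2"
    by blast
  show ?case by (simp, rule app'[OF app.IH(1)[OF h(1)] app.IH(2)[OF h(2)]])
     (simp_all add: h csub_cplus)
next
  case (app_p G t b e m f u')
  show ?case by (simp, rule app_p'[OF app_p.IH[OF app_p.prems]]) simp_all
next
  case (pair G t A bt et mt ft D' u' B bu' eu' mu' fu')
  have "emty D u (G j + D' j) bu eu mu fu" using pair.prems by (simp add: cplus_def cdrop_def)
  from emty_split[OF this] obtain D1 D2 b1 e1 m1 f1 b2 e2 m2 f2 where
    h: "emty D1 u (G j) b1 e1 m1 f1" "emty D2 u (D' j) b2 e2 m2 f2" "D = cplus D1 D2"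
    "bu = b1 + b2" "eu = e1 + e2" "mu = m1 + m2" "fu = f1 + f2"
    by blast
  show ?case by (simp, rule pair'[OF pair.IH(1)[OF h(1)] pair.IH(2)[OF h(2)]])
     (simp_all add: h csub_cplus)
next
  case (pair_p t u')
  then have "D = cempty \<and> bu = 0 \<and> eu = 0 \<and> mu = 0 \<and> fu = 0"
    by (auto simp: cempty_def dest: emty_empty)
  then show ?case by (simp add: pair_pS)
next
  case (match G t s bt et mt ft p A ep mp fp D' u' bu' eu' mu' fu')
  have "emty D u (G (j + nv p) + D' j) bu eu mu fu" using match.prems by (simp add: cplus_def cdrop_def)
  from emty_split[OF this] obtain D1 D2 b1 e1 m1 f1 b2 e2 m2 f2 where
    h: "emty D1 u (G (j + nv p)) b1 e1 m1 f1" "emty D2 u (D' j) b2 e2 m2 f2" "D = cplus D1 D2"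
    "bu = b1 + b2" "eu = e1 + e2" "mu = m1 + m2" "fu = f1 + f2"
    by blast
  have p: "ptyp (crestr (csub (j + nv p) G D1) (nv p)) p A ep mp fp"
    using match by (simp add: crestr_csub)
  show ?case by (simp, rule match'[OF match.IH(1)[OF h(1)] p match.IH(2)[OF h(2)]])
     (simp_all add: h csub_cplus cdrop_csub)
qed


lemma LamE':
  assumes "ety G (Lam p t) \<sigma> b e m f"
  obtains (abs) G1 \<sigma>' b1 e1 m1 f1 A ep mp fp where "ety G1 t \<sigma>' b1 e1 m1 f1"
    "ptyp (crestr G1 (nv p)) p A ep mp fp" "G = cdrop G1 (nv p)" "\<sigma> = Arr A \<sigma>'"
    "b = Suc b1" "e = e1 + ep" "m = m1 + mp" "f = f1 + fp"
  | (absp) G1 \<sigma>' f1 where "ety G1 t \<sigma>' b e m f1" "tight \<sigma>'"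
    "\<forall>A\<in>set (crestr G1 (nv p)). tight_m A" "G = cdrop G1 (nv p)" "\<sigma> = TM" "f = Suc f1"
  using assms by (rule LamE) blast+

lemma AppE':
  assumes "ety G (App t u) \<sigma> b e m f"
  obtains (app) G1 D A bt et mt ft bu eu mu fu where "ety G1 t (Arr A \<sigma>) bt et mt ft"
    "emty D u A bu eu mu fu" "G = cplus G1 D"
    "b = bt + bu" "e = et + eu" "m = mt + mu" "f = ft + fu"
  | (appp) f1 where "ety G t TN b e m f1" "\<sigma> = TN" "f = Suc f1"
  using assms by (rule AppE) blast+

lemma PairE':
  assumes "ety G (Pair t u) \<sigma> b e m f"
  obtains (pair) G1 D A B bt et mt ft bu eu mu fu where "emty G1 t A bt et mt ft"
    "emty D u B bu eu mu fu" "G = cplus G1 D" "\<sigma> = Prod A B"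
    "b = bt + bu" "e = et + eu" "m = mt + mu" "f = ft + fu"
  | (pairp) "G = cempty" "\<sigma> = TM" "b = 0" "e = 0" "m = 0" "f = Suc 0"
  using assms by (rule PairE) blast+

lemma SubE':
  assumes "ety G (Sub t p u) \<sigma> b e m f"
  obtains G1 D A bt et mt ft ep mp fp bu eu mu fu where "ety G1 t \<sigma> bt et mt ft"
    "ptyp (crestr G1 (nv p)) p A ep mp fp" "emty D u A bu eu mu fu"
    "G = cplus (cdrop G1 (nv p)) D"
    "b = bt + bu" "e = et + eu + ep" "m = mt + mu + mp" "f = ft + fu + fp"
  using assms by (rule SubE) blast+

lemma PPE':
  assumes "ptyp P (PP p q) A e m f"
  obtains (x) P1 P2 A1 A2 e1 m1 f1 e2 m2 f2 where "ptyp P1 p A1 e1 m1 f1" "ptyp P2 q A2 e2 m2 f2"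
    "P = P1 @ P2" "A = {#Prod A1 A2#}" "e = e1 + e2" "m = Suc (m1 + m2)" "f = f1 + f2"
  | (p) "length P = nv p + nv q" "\<forall>A\<in>set P. tight_m A" "A = {#TN#}" "e = 0" "m = 0" "f = Suc 0"
  using assms by (rule PPE) blast+

lemma PVE':
  assumes "ptyp P PV A e m f"
  shows "P = [A] \<and> e = Suc 0 \<and> m = 0 \<and> f = 0"
  using assms by (rule PVE) simp


lemma KB_ty:
  "ety G (plug L (Lam p s)) (Arr A \<sigma>) b e m f \<Longrightarrow> emty D u A bu eu mu fu \<Longrightarrow>
   \<exists>b'. b = Suc b' \<and> ety (cplus G D) (plug L (Sub s p (lift (bvn L) 0 u))) \<sigma> (b' + bu) (e + eu) (m + mu) (f + fu)"
proof (induction L arbitrary: G b e m f D u rule: rev_induct)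
  case Nil
  from Nil.prems(1) have "ety G (Lam p s) (Arr A \<sigma>) b e m f" by simp
  then show ?case
  proof (cases rule: LamE')
    case (abs G1 \<sigma>' b1 e1 m1 f1 A' ep mp fp)
    have "ety (cplus G D) (Sub s p u) \<sigma> (b1 + bu) (e + eu) (m + mu) (f + fu)"
      using abs by (intro match'[OF _ _ Nil.prems(2)]) auto
    then show ?thesis using abs by simp
  next
    case absp then show ?thesis by simp
  qed
next
  case (snoc x L)
  obtain q v where x: "x = (q, v)" by (cases x)
  from snoc.prems(1) have "ety G (Sub (plug L (Lam p s)) q v) (Arr A \<sigma>) b e m f" by (simp add: x)
  then obtain G1 G2 B b1 e1 m1 f1 e2 m2 f2 b3 e3 m3 f3 where
    h: "ety G1 (plug L (Lam p s)) (Arr A \<sigma>) b1 e1 m1 f1" "ptyp (crestr G1 (nv q)) q B e2 m2 f2"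
      "emty G2 v B b3 e3 m3 f3" "G = cplus (cdrop G1 (nv q)) G2" "b = b1 + b3" "e = e1 + e3 + e2"
      "m = m1 + m3 + m2" "f = f1 + f3 + f2"
    by (rule SubE')
  have u': "emty (cins (nv q) 0 D) (lift (nv q) 0 u) A bu eu mu fu"
    using lift_ty(2)[OF snoc.prems(2)] .
  from snoc.IH[OF h(1) u'] obtain b' where b': "b1 = Suc b'" and
    ty: "ety (cplus G1 (cins (nv q) 0 D)) (plug L (Sub s p (lift (bvn L) 0 (lift (nv q) 0 u)))) \<sigma>
           (b' + bu) (e1 + eu) (m1 + mu) (f1 + fu)" by blast
  have p: "ptyp (crestr (cplus G1 (cins (nv q) 0 D)) (nv q)) q B e2 m2 f2"
  proof -
    have "crestr (cplus G1 (cins (nv q) 0 D)) (nv q) = crestr G1 (nv q)"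
      by (auto simp: crestr_def cplus_def cins_def)
    then show ?thesis using h(2) by simp
  qed
  have "ety (cplus G D) (Sub (plug L (Sub s p (lift (bvn L) 0 (lift (nv q) 0 u)))) q v) \<sigma>
     (b' + bu + b3) (e1 + eu + e3 + e2) (m1 + mu + m3 + m2) (f1 + fu + f3 + f2)"
    by (rule match'[OF ty p h(3)])
       (auto simp: h(4) fun_eq_iff cplus_def cdrop_def cins_def add_ac)
  then show ?case using h b' by (simp add: x lift_lift add_ac)
qed

lemma map_upt_shift: "map G [n..<n + k] = map (\<lambda>x. G (x + n)) [0..<k]"
  by (induction k) (auto simp: add.commute)

lemma KM_ty:
  "ety Gu (plug L (Pair u1 u2)) (Prod A1 A2) bu eu mu fu \<Longrightarrow> ety Gt t \<sigma> bt et mt ft \<Longrightarrow>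
   ptyp (crestr Gt (nv p1)) p1 A1 e1 m1 f1 \<Longrightarrow>
   ptyp (map Gt [nv p1..<nv p1 + nv p2]) p2 A2 e2 m2 f2 \<Longrightarrow>
   ety (cplus (cdrop Gt (nv p1 + nv p2)) Gu)
     (plug L (Sub (Sub (lift (bvn L) (nv p1 + nv p2) t) p1 (lift (nv p2) 0 u1)) p2 u2)) \<sigma>
     (bt + bu) (et + eu + e1 + e2) (mt + mu + m1 + m2) (ft + fu + f1 + f2)"
proof (induction L arbitrary: Gu bu eu mu fu Gt t bt et mt ft rule: rev_induct)
  case Nil
  from Nil.prems(1) have "ety Gu (Pair u1 u2) (Prod A1 A2) bu eu mu fu" by simp
  then show ?case
  proof (cases rule: PairE')
    case (pair D1 D2 A B b1 e1' m1' f1' b2 e2' m2' f2')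
    have i: "ety (cplus (cdrop Gt (nv p1)) (cins (nv p2) 0 D1)) (Sub t p1 (lift (nv p2) 0 u1)) \<sigma>
              (bt + b1) (et + e1' + e1) (mt + m1' + m1) (ft + f1' + f1)"
      by (rule match'[OF Nil.prems(2) Nil.prems(3) lift_ty(2)]) (use pair in simp_all)
    have cr: "crestr (cplus (cdrop Gt (nv p1)) (cins (nv p2) 0 D1)) (nv p2) = map Gt [nv p1..<nv p1 + nv p2]"
      by (auto simp: crestr_def cplus_def cdrop_def cins_def map_upt_shift)
    have "ety (cplus (cdrop (cplus (cdrop Gt (nv p1)) (cins (nv p2) 0 D1)) (nv p2)) D2)
            (Sub (Sub t p1 (lift (nv p2) 0 u1)) p2 u2) \<sigma>
            (bt + b1 + b2) (et + e1' + e1 + e2' + e2) (mt + m1' + m1 + m2' + m2) (ft + f1' + f1 + f2' + f2)"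
      by (rule match'[OF i]) (use pair Nil.prems(4) cr in simp_all)
    moreover have "cplus (cdrop (cplus (cdrop Gt (nv p1)) (cins (nv p2) 0 D1)) (nv p2)) D2 =
       cplus (cdrop Gt (nv p1 + nv p2)) Gu"
      using pair by (auto simp: fun_eq_iff cplus_def cdrop_def cins_def add_ac)
    ultimately show ?thesis using pair by (simp add: add_ac)
  next
    case pairp then show ?thesis by simp
  qed
next
  case (snoc x L)
  obtain q v where x: "x = (q, v)" by (cases x)
  from snoc.prems(1) have "ety Gu (Sub (plug L (Pair u1 u2)) q v) (Prod A1 A2) bu eu mu fu" by (simp add: x)
  then obtain G1 G2 B b1 e1' m1' f1' ep mp fp b3 e3 m3 f3 where
    h: "ety G1 (plug L (Pair u1 u2)) (Prod A1 A2) b1 e1' m1' f1'" "ptyp (crestr G1 (nv q)) q B ep mp fp"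
      "emty G2 v B b3 e3 m3 f3" "Gu = cplus (cdrop G1 (nv q)) G2" "bu = b1 + b3" "eu = e1' + e3 + ep"
      "mu = m1' + m3 + mp" "fu = f1' + f3 + fp"
    by (rule SubE')
  let ?n = "nv p1 + nv p2"
  have t': "ety (cins (nv q) ?n Gt) (lift (nv q) ?n t) \<sigma> bt et mt ft"
    using lift_ty(1)[OF snoc.prems(2)] .
  have c1: "crestr (cins (nv q) ?n Gt) (nv p1) = crestr Gt (nv p1)"
    by (rule crestr_cins) simp
  have c2: "map (cins (nv q) ?n Gt) [nv p1..<?n] = map Gt [nv p1..<?n]"
    by (rule map_cong) (auto simp: cins_def)
  from snoc.IH[OF h(1) t'] snoc.prems(3,4) c1 c2
  have ty: "ety (cplus (cdrop (cins (nv q) ?n Gt) ?n) G1)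
     (plug L (Sub (Sub (lift (bvn L) ?n (lift (nv q) ?n t)) p1 (lift (nv p2) 0 u1)) p2 u2)) \<sigma>
     (bt + b1) (et + e1' + e1 + e2) (mt + m1' + m1 + m2) (ft + f1' + f1 + f2)" by simp
  have p: "ptyp (crestr (cplus (cdrop (cins (nv q) ?n Gt) ?n) G1) (nv q)) q B ep mp fp"
  proof -
    have "crestr (cplus (cdrop (cins (nv q) ?n Gt) ?n) G1) (nv q) = crestr G1 (nv q)"
      by (auto simp: crestr_def cplus_def cins_def cdrop_def)
    then show ?thesis using h(2) by simp
  qed
  have "ety (cplus (cdrop Gt ?n) Gu)
     (Sub (plug L (Sub (Sub (lift (bvn L) ?n (lift (nv q) ?n t)) p1 (lift (nv p2) 0 u1)) p2 u2)) q v) \<sigma>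
     (bt + b1 + b3) (et + e1' + e1 + e2 + e3 + ep) (mt + m1' + m1 + m2 + m3 + mp) (ft + f1' + f1 + f2 + f3 + fp)"
    by (rule match'[OF ty p h(3)])
       (auto simp: h(4) fun_eq_iff cplus_def cdrop_def cins_def add_ac)
  then show ?case using h by (simp add: x lift_lift add_ac)
qed


definition step_ok :: "kind \<Rightarrow> nat \<Rightarrow> nat \<Rightarrow> nat \<Rightarrow> nat \<Rightarrow> nat \<Rightarrow> nat \<Rightarrow> bool" where
  "step_ok k b e m b' e' m' \<longleftrightarrow> (case k of
      KB \<Rightarrow> b = Suc b' \<and> e = e' \<and> m = m'
    | KE \<Rightarrow> b = b' \<and> e = Suc e' \<and> m = m'
    | KM \<Rightarrow> b = b' \<and> e = e' \<and> m = Suc m')"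

lemma step_ok_add: "step_ok k b e m b' e' m' \<Longrightarrow> step_ok k (b + x) (e + y) (m + z) (b' + x) (e' + y) (m' + z)"
  by (cases k) (auto simp: step_ok_def)

lemma step_ok_add2: "step_ok k b e m b' e' m' \<Longrightarrow> step_ok k (x + b) (y + e) (z + m) (x + b') (y + e') (z + m')"
  by (cases k) (auto simp: step_ok_def)

lemma Sub_steps_cases:
  assumes "(k, t') \<in> hsteps (Sub t p u)"
  obtains (L) t'' where "(k, t'') \<in> hsteps t" "t' = Sub t'' p u"
  | (E) "hsteps t = {}" "p = PV" "k = KE" "t' = subst t 0 u"
  | (M) p1 p2 L u1 u2 where "hsteps t = {}" "p = PP p1 p2" "k = KM" "u = plug L (Pair u1 u2)"
      "t' = plug L (Sub (Sub (lift (bvn L) (nv p1 + nv p2) t) p1 (lift (nv p2) 0 u1)) p2 u2)"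
  | (U) p1 p2 u' where "hsteps t = {}" "p = PP p1 p2" "(k, u') \<in> hsteps u" "t' = Sub t p u'"
  using assms by (cases p) (auto split: if_splits)

lemma App_steps_cases:
  assumes "(k, t') \<in> hsteps (App t u)"
  obtains (B) L p s where "k = KB" "t = plug L (Lam p s)" "t' = plug L (Sub s p (lift (bvn L) 0 u))"
  | (L) t'' where "\<not> is_abs t" "(k, t'') \<in> hsteps t" "t' = App t'' u"
  using assms by (auto split: if_splits)

lemma emty_single_ex: "emty D u {#\<tau>#} bu eu mu fu \<Longrightarrow> ety D u \<tau> bu eu mu fu"
  by (rule emty_single)

lemma SR:
  "(k, t') \<in> hsteps t \<Longrightarrow> ety G t \<sigma> b e m f \<Longrightarrow>
   \<exists>b' e' m'. ety G t' \<sigma> b' e' m' f \<and> step_ok k b e m b' e' m'"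
proof (induction t arbitrary: k t' G \<sigma> b e m f)
  case (Var x) then show ?case by simp
next
  case (Pair a c) then show ?case by simp
next
  case (Lam p t)
  from Lam.prems(1) obtain t'' where st: "(k, t'') \<in> hsteps t" and t': "t' = Lam p t''" by auto
  from Lam.prems(2) show ?case
  proof (cases rule: LamE')
    case (abs G1 \<sigma>' b1 e1 m1 f1 A ep mp fp)
    from Lam.IH[OF st abs(1)] obtain b' e' m' where
      h: "ety G1 t'' \<sigma>' b' e' m' f1" "step_ok k b1 e1 m1 b' e' m'" by blast
    have "ety G (Lam p t'') \<sigma> (b' + 1) (e' + ep) (m' + mp) f"
      by (rule abs'[OF h(1) abs(2)]) (use abs in simp_all)
    moreover have "step_ok k b e m (b' + 1) (e' + ep) (m' + mp)"
      using step_ok_add[OF h(2), of 1 ep mp] abs by simp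
    ultimately show ?thesis using t' by blast
  next
    case (absp G1 \<sigma>' f1)
    from Lam.IH[OF st absp(1)] obtain b' e' m' where
      h: "ety G1 t'' \<sigma>' b' e' m' f1" "step_ok k b e m b' e' m'" by blast
    have "ety G (Lam p t'') \<sigma> b' e' m' f"
      by (rule abs_p'[OF h(1) absp(2) absp(3)]) (use absp in simp_all)
    then show ?thesis using h t' by blast
  qed
next
  case (App t u)
  from App.prems(1) show ?case
  proof (cases rule: App_steps_cases)
    case (B L p s)
    from App.prems(2) show ?thesis
    proof (cases rule: AppE')
      case (app G1 D A bt et mt ft bu eu mu fu)
      from KB_ty[of G1 L p s A \<sigma> bt et mt ft D u bu eu mu fu] app B obtain b' where
        "bt = Suc b'" "ety G t' \<sigma> (b' + bu) (et + eu) (mt + mu) (ft + fu)" by auto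
      then show ?thesis using app B by (auto simp: step_ok_def)
    next
      case (appp f1)
      then show ?thesis using plug_Lam_ty B by blast
    qed
  next
    case (L t'')
    from App.prems(2) show ?thesis
    proof (cases rule: AppE')
      case (app G1 D A bt et mt ft bu eu mu fu)
      from App.IH(1)[OF L(2) app(1)] obtain b' e' m' where
        h: "ety G1 t'' (Arr A \<sigma>) b' e' m' ft" "step_ok k bt et mt b' e' m'" by blast
      have "ety G (App t'' u) \<sigma> (b' + bu) (e' + eu) (m' + mu) f"
        by (rule app'[OF h(1) app(2)]) (use app in simp_all)
      moreover have "step_ok k b e m (b' + bu) (e' + eu) (m' + mu)"
        using step_ok_add[OF h(2), of bu eu mu] app by simp
      ultimately show ?thesis using L by blast
    next
      case (appp f1)
      from App.IH(1)[OF L(2) appp(1)] obtain b' e' m' where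
        h: "ety G t'' TN b' e' m' f1" "step_ok k b e m b' e' m'" by blast
      have "ety G (App t'' u) \<sigma> b' e' m' f"
        by (rule app_p'[OF h(1)]) (use appp in simp_all)
      then show ?thesis using h L by blast
    qed
  qed
next
  case (Sub t p u)
  from Sub.prems(2) obtain G1 D A bt et mt ft ep mp fp bu eu mu fu where
    h: "ety G1 t \<sigma> bt et mt ft" "ptyp (crestr G1 (nv p)) p A ep mp fp" "emty D u A bu eu mu fu"
    "G = cplus (cdrop G1 (nv p)) D"
    "b = bt + bu" "e = et + eu + ep" "m = mt + mu + mp" "f = ft + fu + fp"
    by (rule SubE')
  from Sub.prems(1) show ?case
  proof (cases rule: Sub_steps_cases)
    case (L t'')
    from Sub.IH(1)[OF L(1) h(1)] obtain b' e' m' where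
      i: "ety G1 t'' \<sigma> b' e' m' ft" "step_ok k bt et mt b' e' m'" by blast
    have "ety G (Sub t'' p u) \<sigma> (b' + bu) (e' + eu + ep) (m' + mu + mp) f"
      by (rule match'[OF i(1) h(2) h(3)]) (use h in simp_all)
    moreover have "step_ok k b e m (b' + bu) (e' + eu + ep) (m' + mu + mp)"
      using step_ok_add[OF i(2), of bu "eu + ep" "mu + mp"] h by (simp add: add.assoc)
    ultimately show ?thesis using L by blast
  next
    case E
    have "crestr G1 (nv p) = [G1 0]" using E by (simp add: crestr_def)
    with PVE'[of "crestr G1 (nv p)" A ep mp fp] h(2) E
    have pv: "A = G1 0" "ep = Suc 0" "mp = 0" "fp = 0" by auto
    from subst_ty(1)[OF h(1), of D u 0 bu eu mu fu] h(3) pv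
    have "ety (csub 0 G1 D) (subst t 0 u) \<sigma> (bt + bu) (et + eu) (mt + mu) (ft + fu)" by simp
    moreover have "csub 0 G1 D = G" using h(4) E by (auto simp: csub_def cplus_def cdrop_def fun_eq_iff)
    ultimately show ?thesis using E h pv by (auto simp: step_ok_def)
  next
    case (M p1 p2 L u1 u2)
    from h(2) M(2) have pt: "ptyp (crestr G1 (nv p1 + nv p2)) (PP p1 p2) A ep mp fp" by simp
    then show ?thesis
    proof (cases rule: PPE')
      case (x P1 P2 A1 A2 e1 m1 f1 e2 m2 f2)
      have l1: "length P1 = nv p1" "length P2 = nv p2" using x(1,2) ptyp_length by auto
      have up: "[0..<nv p1 + nv p2] = [0..<nv p1] @ [nv p1..<nv p1 + nv p2]"
        by (rule upt_add_eq_append) simp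
      have "P1 @ P2 = crestr G1 (nv p1) @ map G1 [nv p1..<nv p1 + nv p2]"
        using x(3) unfolding crestr_def up by simp
      moreover have "length (crestr G1 (nv p1)) = nv p1" by (simp add: crestr_def)
      ultimately have P: "P1 = crestr G1 (nv p1)" "P2 = map G1 [nv p1..<nv p1 + nv p2]"
        using l1 append_eq_append_conv[of P1 "crestr G1 (nv p1)" P2] by auto
      have uty: "ety D (plug L (Pair u1 u2)) (Prod A1 A2) bu eu mu fu"
        using h(3) x(4) M(4) emty_single by simp
      have p1: "ptyp (crestr G1 (nv p1)) p1 A1 e1 m1 f1" using x(1) P(1) by simp
      have p2: "ptyp (map G1 [nv p1..<nv p1 + nv p2]) p2 A2 e2 m2 f2" using x(2) P(2) by simp
      have "ety (cplus (cdrop G1 (nv p1 + nv p2)) D) t' \<sigma> (bt + bu) (et + eu + e1 + e2) (mt + mu + m1 + m2) (ft + fu + f1 + f2)"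
        unfolding M(5) by (rule KM_ty[OF uty h(1) p1 p2])
      moreover have "G = cplus (cdrop G1 (nv p1 + nv p2)) D" using h(4) M(2) by simp
      moreover have "f = ft + fu + f1 + f2" "step_ok k b e m (bt + bu) (et + eu + e1 + e2) (mt + mu + m1 + m2)"
        using h(5-8) x(5-7) M(3) by (simp_all add: step_ok_def)
      ultimately show ?thesis by metis
    next
      case p
      have "ety D (plug L (Pair u1 u2)) TN bu eu mu fu"
        using h(3) p(3) M(4) by (auto intro: emty_single)
      then show ?thesis using plug_Pair_ty by blast
    qed
  next
    case (U p1 p2 u')
    from h(2) U(2) have pt: "ptyp (crestr G1 (nv p1 + nv p2)) (PP p1 p2) A ep mp fp" by simp
    obtain \<tau> where A: "A = {#\<tau>#}" using pt by (cases rule: PPE') auto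
    have uty: "ety D u \<tau> bu eu mu fu" using h(3) A by (auto intro: emty_single)
    from Sub.IH(2)[OF U(3) uty] obtain b' e' m' where
      i: "ety D u' \<tau> b' e' m' fu" "step_ok k bu eu mu b' e' m'" by blast
    have "ety G (Sub t p u') \<sigma> (bt + b') (et + e' + ep) (mt + m' + mp) f"
      by (rule match'[OF h(1) h(2) single_emty[OF i(1), folded A]]) (use h in simp_all)
    moreover have "step_ok k b e m (bt + b') (et + e' + ep) (mt + m' + mp)"
      using step_ok_add[OF step_ok_add2[OF i(2), of bt et mt], of 0 ep mp] h by (simp add: add_ac)
    ultimately show ?thesis using U by blast
  qed
qed


lemma neutral:
  "hsteps t = {} \<Longrightarrow> \<not> is_abs t \<Longrightarrow> \<not> is_pair t \<Longrightarrow> ety G t \<sigma> b e m f \<Longrightarrow> tight_ctx G \<Longrightarrow>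
   tight \<sigma> \<and> b = 0 \<and> e = 0 \<and> m = 0 \<and> canN t \<and> f = csize t"
proof (induction t arbitrary: G \<sigma> b e m f)
  case (Var x)
  have h: "G = csing x {#\<sigma>#} \<and> b = 0 \<and> e = 0 \<and> m = 0 \<and> f = 0"
    using Var.prems(4) by (rule VarE) simp
  then have "tight_m {#\<sigma>#}" using Var.prems(5) unfolding tight_ctx_def csing_def by metis
  then show ?case using h by (simp add: tight_m_def cN_var)
next
  case (Lam p t) then show ?case by simp
next
  case (Pair a c) then show ?case by simp
next
  case (App t u)
  have n: "\<not> is_abs t" "hsteps t = {}" using hsteps_App_empty[THEN iffD1, OF App.prems(1)] by simp_all
  from App.prems(4) show ?case
  proof (cases rule: AppE')
    case (app G1 D A bt et mt ft bu eu mu fu)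
    have "\<not> is_pair t" using is_pair_ty app(1) by blast
    then have "tight (Arr A \<sigma>)" using App.IH(1)[OF n(2) n(1) _ app(1)] App.prems(5) app(3) by simp
    then show ?thesis by (simp add: tight_def)
  next
    case (appp f1)
    have "\<not> is_pair t" using is_pair_ty appp(1) by blast
    then have "b = 0 \<and> e = 0 \<and> m = 0 \<and> canN t \<and> f1 = csize t"
      using App.IH(1)[OF n(2) n(1) _ appp(1)] App.prems(5) by simp
    then show ?thesis using appp by (simp add: tight_def cN_app)
  qed
next
  case (Sub t p u)
  from Sub.prems(1) obtain p1 p2 where n: "hsteps t = {}" "p = PP p1 p2" "\<not> is_pair u" "hsteps u = {}"
    using hsteps_Sub_empty[THEN iffD1, OF Sub.prems(1)] by blast
  have nt: "\<not> is_abs t" "\<not> is_pair t" using Sub.prems(2,3) by simp_all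
  from Sub.prems(4) obtain G1 D A bt et mt ft ep mp fp bu eu mu fu where
    h: "ety G1 t \<sigma> bt et mt ft" "ptyp (crestr G1 (nv p)) p A ep mp fp" "emty D u A bu eu mu fu"
    "G = cplus (cdrop G1 (nv p)) D"
    "b = bt + bu" "e = et + eu + ep" "m = mt + mu + mp" "f = ft + fu + fp"
    by (rule SubE')
  have tc: "tight_ctx (cdrop G1 (nv p))" "tight_ctx D" using Sub.prems(5) h(4) by simp_all
  from h(2) n(2) have pt: "ptyp (crestr G1 (nv p)) (PP p1 p2) A ep mp fp" by simp
  then show ?case
  proof (cases rule: PPE')
    case (x P1 P2 A1 A2 e1 m1 f1 e2 m2 f2)
    have uty: "ety D u (Prod A1 A2) bu eu mu fu" using h(3) x(4) emty_single by simp
    have "\<not> is_abs u" using is_abs_ty uty by blast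
    then have "tight (Prod A1 A2)" using Sub.IH(2)[OF n(4) _ n(3) uty tc(2)] by simp
    then show ?thesis by (simp add: tight_def)
  next
    case p
    have uty: "ety D u TN bu eu mu fu" using h(3) p(3) emty_single by simp
    have "\<not> is_abs u" using is_abs_ty uty by blast
    then have U: "bu = 0 \<and> eu = 0 \<and> mu = 0 \<and> canN u \<and> fu = csize u"
      using Sub.IH(2)[OF n(4) _ n(3) uty tc(2)] by simp
    have "tight_ctx G1" using tight_ctx_from_parts[OF tc(1)] p(2) by simp
    then have T: "tight \<sigma> \<and> bt = 0 \<and> et = 0 \<and> mt = 0 \<and> canN t \<and> ft = csize t"
      using Sub.IH(1)[OF n(1) nt h(1)] by simp
    show ?thesis using U T h p n(2) by (simp add: cN_sub)
  qed
qed

lemma normal: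
  "hsteps t = {} \<Longrightarrow> ety G t \<sigma> b e m f \<Longrightarrow> tight_ctx G \<Longrightarrow> tight \<sigma> \<Longrightarrow>
   canM t \<and> b = 0 \<and> e = 0 \<and> m = 0 \<and> f = csize t"
proof (induction t arbitrary: G \<sigma> b e m f)
  case (Var x)
  then show ?case using neutral[of "Var x"] by (auto intro: cM_N)
next
  case (Pair a c)
  from Pair.prems(2) show ?case
  proof (cases rule: PairE')
    case pair then show ?thesis using Pair.prems(4) by (simp add: tight_def)
  next
    case pairp then show ?thesis by (simp add: cM_pair)
  qed
next
  case (Lam p t)
  from Lam.prems(2) show ?case
  proof (cases rule: LamE')
    case abs then show ?thesis using Lam.prems(4) by (simp add: tight_def)
  next
    case (absp G1 \<sigma>' f1)
    have "tight_ctx G1" using tight_ctx_from_parts[of G1 "nv p"] absp Lam.prems(3) by simp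
    then have "canM t \<and> b = 0 \<and> e = 0 \<and> m = 0 \<and> f1 = csize t"
      using Lam.IH[OF _ absp(1)] Lam.prems(1) absp(2) by simp
    then show ?thesis using absp by (simp add: cM_lam)
  qed
next
  case (App t u)
  then show ?case using neutral[of "App t u"] by (auto intro: cM_N)
next
  case (Sub t p u)
  from Sub.prems(1) obtain p1 p2 where n: "hsteps t = {}" "p = PP p1 p2" "\<not> is_pair u" "hsteps u = {}"
    using hsteps_Sub_empty[THEN iffD1, OF Sub.prems(1)] by blast
  from Sub.prems(2) obtain G1 D A bt et mt ft ep mp fp bu eu mu fu where
    h: "ety G1 t \<sigma> bt et mt ft" "ptyp (crestr G1 (nv p)) p A ep mp fp" "emty D u A bu eu mu fu"
    "G = cplus (cdrop G1 (nv p)) D"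
    "b = bt + bu" "e = et + eu + ep" "m = mt + mu + mp" "f = ft + fu + fp"
    by (rule SubE')
  have tc: "tight_ctx (cdrop G1 (nv p))" "tight_ctx D" using Sub.prems(3) h(4) by simp_all
  from h(2) n(2) have pt: "ptyp (crestr G1 (nv p)) (PP p1 p2) A ep mp fp" by simp
  then show ?case
  proof (cases rule: PPE')
    case (x P1 P2 A1 A2 e1 m1 f1 e2 m2 f2)
    have uty: "ety D u (Prod A1 A2) bu eu mu fu" using h(3) x(4) emty_single by simp
    have "\<not> is_abs u" using is_abs_ty uty by blast
    then have "tight (Prod A1 A2)" using neutral[OF n(4) _ n(3) uty tc(2)] by simp
    then show ?thesis by (simp add: tight_def)
  next
    case p
    have uty: "ety D u TN bu eu mu fu" using h(3) p(3) emty_single by simp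
    have "\<not> is_abs u" using is_abs_ty uty by blast
    then have U: "bu = 0 \<and> eu = 0 \<and> mu = 0 \<and> canN u \<and> fu = csize u"
      using neutral[OF n(4) _ n(3) uty tc(2)] by simp
    have "tight_ctx G1" using tight_ctx_from_parts[OF tc(1)] p(2) by simp
    then have T: "canM t \<and> bt = 0 \<and> et = 0 \<and> mt = 0 \<and> ft = csize t"
      using Sub.IH(1)[OF n(1) h(1)] Sub.prems(4) by simp
    show ?thesis using U T h p n(2) by (simp add: cM_sub)
  qed
qed

theorem theorem2:
  assumes "ety G t s b e m f"
    and "tight_ctx G"
    and "tight s"
  shows "\<exists>u. canM u \<and> hreds t b e m u \<and> csize u = f"
  using assms
proof (induction "b + e + m" arbitrary: t b e m rule: less_induct)
  case less
  show ?case
  proof (cases "hsteps t = {}")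
    case True
    from normal[OF True less.prems] show ?thesis by (auto intro: hr_refl)
  next
    case False
    then obtain k t' where st: "(k, t') \<in> hsteps t" by auto
    from SR[OF st less.prems(1)] obtain b' e' m' where
      h: "ety G t' s b' e' m' f" "step_ok k b e m b' e' m'" by blast
    have hr: "hred t k t'" using st by (simp add: hred_def)
    have lt: "b' + e' + m' < b + e + m" using h(2) by (cases k) (auto simp: step_ok_def)
    from less.hyps[OF lt h(1) less.prems(2,3)] obtain u where
      u: "canM u" "hreds t' b' e' m' u" "csize u = f" by blast
    show ?thesis
    proof (cases k)
      case KB then show ?thesis using u hr h(2) by (auto simp: step_ok_def intro: hr_b)
    next
      case KE then show ?thesis using u hr h(2) by (auto simp: step_ok_def intro: hr_e)
    next
      case KM then show ?thesis using u hr h(2) by (auto simp: step_ok_def intro: hr_m)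
    qed
  qed
qed

end
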